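(* Let $n\ge2$, let $\mathbb{A}=(A_{ij})_{i,j=1}^n$ be an operator matrix as in the context, and assume that for all $i\ne j$ there are constants $c_{ij},d_{ij}\ge0$ such that $\|A_{ij}x_j\|_{X_i}\le c_{ij}\|A_{jj}x_j\|_{X_j}+d_{ij}\|x_j\|_{X_j}$ for all $x_j\in\mathcal{D}(A_{jj})$, and moreover $\sum_{i=1,i\ne j}^nc_{ij}<1$ for every $j$. Let $\pi$ be a permutation of $\{1,\ldots,n\}$. Then $\mathbb{A}(\pi)_k$ is closed on its domain for all $k\in\{1,\ldots,n\}$.
   Context: Let $X_1,\ldots,X_n$ be complex Banach spaces and $X=X_1\times\cdots\times X_n$ with norm $\|x\|=\sum_i\|x_i\|_{X_i}$. For $i,j$, $A_{ij}:\mathcal{D}(A_{ij})\subset X_j\to X_i$ are linear, $A_{ii}$ closed, and for $i\ne j$ $\mathcal{D}(A_{jj})\subset\mathcal{D}(A_{ij})$. $\mathbb{A}=(A_{ij})$ acts on $\mathcal{D}(A_{11})\times\cdots\times\mathcal{D}(A_{nn})$ by $(\mathbb{A}x)_i=\sum_jA_{ij}x_j$. For a permutation $\pi$, $\mathbb{A}(\pi):=(A_{\pi^{-1}(i),\pi^{-1}(j)})_{i,j=1}^n$ acts on $X_{\pi^{-1}(1)}\times\cdots\times X_{\pi^{-1}(n)}$ with domain $\prod_i\mathcal{D}(A_{\pi^{-1}(i),\pi^{-1}(i)})$, and $\mathbb{A}(\pi)_k$ is its upper-left $k\times k$ block, acting on $X_{\pi^{-1}(1)}\times\cdots\times X_{\pi^{-1}(k)}$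 with domain $\prod_{i=1}^k\mathcal{D}(A_{\pi^{-1}(i),\pi^{-1}(i)})$. *)

theory Defs
  imports "HOL-Analysis.Analysis" "HOL-Combinatorics.Permutations"
begin

text \<open>A complex Banach space is modelled as a real Banach space together with a
  complex structure J (multiplication by the imaginary unit).\<close>

definition cscale :: "('a::real_normed_vector \<Rightarrow> 'a) \<Rightarrow> complex \<Rightarrow> 'a \<Rightarrow> 'a" where
  "cscale J c x = Re c *\<^sub>R x + Im c *\<^sub>R J x"

definition complex_structure :: "('a::real_normed_vector \<Rightarrow> 'a) \<Rightarrow> bool" where
  "complex_structure J \<longleftrightarrow> linear J \<and> (\<forall>x. J (J x) = - x)
     \<and> (\<forall>c x. norm (cscale J c x) = cmod c * norm x)"

definition csubspace :: "('a::real_normed_vector \<Rightarrow> 'a) \<Rightarrow> 'a set \<Rightarrow> bool" where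
  "csubspace J S \<longleftrightarrow> subspace S \<and> (\<forall>x\<in>S. J x \<in> S)"

definition clinear_on :: "('a::real_normed_vector \<Rightarrow> 'a) \<Rightarrow> 'a set \<Rightarrow> ('a \<Rightarrow> 'a) \<Rightarrow> bool" where
  "clinear_on J D A \<longleftrightarrow> csubspace J D
     \<and> (\<forall>x\<in>D. \<forall>y\<in>D. A (x + y) = A x + A y)
     \<and> (\<forall>c. \<forall>x\<in>D. A (cscale J c x) = cscale J c (A x))"

definition closed_operator :: "'a::real_normed_vector set \<Rightarrow> ('a \<Rightarrow> 'a) \<Rightarrow> bool" where
  "closed_operator D A \<longleftrightarrow> closed {(x, A x) | x. x \<in> D}"

text \<open>Elements of X_{s 1} x ... x X_{s k}, represented as functions on indices
  supported in {1..k}.\<close>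
definition prod_space :: "(nat \<Rightarrow> 'a::real_normed_vector set) \<Rightarrow> (nat \<Rightarrow> nat) \<Rightarrow> nat \<Rightarrow> (nat \<Rightarrow> 'a) set" where
  "prod_space S s k = {x. (\<forall>i\<in>{1..k}. x i \<in> S (s i)) \<and> (\<forall>i. i \<notin> {1..k} \<longrightarrow> x i = 0)}"

definition prod_norm :: "nat \<Rightarrow> (nat \<Rightarrow> 'a::real_normed_vector) \<Rightarrow> real" where
  "prod_norm k x = (\<Sum>i=1..k. norm (x i))"

text \<open>The upper left k x k block of the permuted operator matrix A(pi), with
  s = pi^{-1}: domain and action.\<close>
definition block_dom :: "(nat \<Rightarrow> nat \<Rightarrow> 'a::real_normed_vector set) \<Rightarrow> (nat \<Rightarrow> nat) \<Rightarrow> nat \<Rightarrow> (nat \<Rightarrow> 'a) set" where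
  "block_dom D s k = {x. (\<forall>i\<in>{1..k}. x i \<in> D (s i) (s i)) \<and> (\<forall>i. i \<notin> {1..k} \<longrightarrow> x i = 0)}"

definition block_op :: "(nat \<Rightarrow> nat \<Rightarrow> 'a \<Rightarrow> 'a::real_normed_vector) \<Rightarrow> (nat \<Rightarrow> nat) \<Rightarrow> nat \<Rightarrow> (nat \<Rightarrow> 'a) \<Rightarrow> (nat \<Rightarrow> 'a)" where
  "block_op A s k x = (\<lambda>i. if i \<in> {1..k} then (\<Sum>j=1..k. A (s i) (s j) (x j)) else 0)"

definition block_closed :: "(nat \<Rightarrow> 'a::real_normed_vector set) \<Rightarrow> (nat \<Rightarrow> nat) \<Rightarrow> nat
     \<Rightarrow> (nat \<Rightarrow> 'a) set \<Rightarrow> ((nat \<Rightarrow> 'a) \<Rightarrow> (nat \<Rightarrow> 'a)) \<Rightarrow> bool" where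
  "block_closed S s k Dom B \<longleftrightarrow>
     (\<forall>xs x y. (\<forall>m. xs m \<in> Dom) \<and> x \<in> prod_space S s k \<and> y \<in> prod_space S s k
        \<and> (\<lambda>m. prod_norm k (\<lambda>i. xs m i - x i)) \<longlonglongrightarrow> 0
        \<and> (\<lambda>m. prod_norm k (\<lambda>i. B (xs m) i - y i)) \<longlonglongrightarrow> 0
        \<longrightarrow> x \<in> Dom \<and> B x = y)"

end

theory Submission
  imports Defs
begin

lemma swap_lemma:
  fixes f :: "nat \<Rightarrow> nat \<Rightarrow> real"
  assumes fin: "finite I"
  shows "(\<Sum>i\<in>I. \<Sum>j\<in>I-{i}. f i j) = (\<Sum>j\<in>I. \<Sum>i\<in>I-{j}. f i j)"
proof -
  have e: "(\<Sum>j\<in>I-{i}. g j) = (\<Sum>j\<in>I. if j = i then 0 else g j)" for i and g :: "nat \<Rightarrow> real"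
    using fin by (simp add: sum.If_cases Diff_eq Compl_eq)
  have "(\<Sum>i\<in>I. \<Sum>j\<in>I-{i}. f i j) = (\<Sum>i\<in>I. \<Sum>j\<in>I. if j = i then 0 else f i j)"
    by (simp add: e)
  also have "\<dots> = (\<Sum>j\<in>I. \<Sum>i\<in>I. if j = i then 0 else f i j)" by (rule sum.swap)
  also have "\<dots> = (\<Sum>j\<in>I. \<Sum>i\<in>I-{j}. f i j)"
    by (simp add: e eq_commute)
  finally show ?thesis .
qed

lemma core_est:
  fixes T :: "nat \<Rightarrow> nat \<Rightarrow> 'a::real_normed_vector \<Rightarrow> 'a"
  assumes fin: "finite I"
    and bound: "\<forall>i\<in>I. \<forall>j\<in>I. i \<noteq> j \<longrightarrow> (\<forall>x\<in>E j. norm (T i j x) \<le> c i j * norm (T j j x) + d i j * norm x)"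
    and u: "\<forall>j\<in>I. u j \<in> E j"
  shows "(\<Sum>j\<in>I. (1 - (\<Sum>i\<in>I-{j}. c i j)) * norm (T j j (u j)))
     \<le> (\<Sum>i\<in>I. norm (\<Sum>j\<in>I. T i j (u j))) + (\<Sum>i\<in>I. \<Sum>j\<in>I-{i}. d i j * norm (u j))"
proof -
  have step1: "norm (T i i (u i)) \<le> norm (\<Sum>j\<in>I. T i j (u j))
      + ((\<Sum>j\<in>I-{i}. c i j * norm (T j j (u j))) + (\<Sum>j\<in>I-{i}. d i j * norm (u j)))" if i: "i\<in>I" for i
  proof -
    have "(\<Sum>j\<in>I. T i j (u j)) = T i i (u i) + (\<Sum>j\<in>I-{i}. T i j (u j))"
      using sum.remove[OF fin i] by simp
    hence "T i i (u i) = (\<Sum>j\<in>I. T i j (u j)) - (\<Sum>j\<in>I-{i}. T i j (u j))" by (simp add: algebra_simps)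
    hence "norm (T i i (u i)) \<le> norm (\<Sum>j\<in>I. T i j (u j)) + norm (\<Sum>j\<in>I-{i}. T i j (u j))"
      by (metis norm_triangle_ineq4)
    also have "norm (\<Sum>j\<in>I-{i}. T i j (u j)) \<le> (\<Sum>j\<in>I-{i}. norm (T i j (u j)))" by (rule norm_sum)
    also have "\<dots> \<le> (\<Sum>j\<in>I-{i}. c i j * norm (T j j (u j)) + d i j * norm (u j))"
      apply (rule sum_mono) using bound i u by auto
    finally show ?thesis by (simp add: sum.distrib)
  qed
  have "(\<Sum>i\<in>I. norm (T i i (u i))) \<le> (\<Sum>i\<in>I. norm (\<Sum>j\<in>I. T i j (u j))
      + ((\<Sum>j\<in>I-{i}. c i j * norm (T j j (u j))) + (\<Sum>j\<in>I-{i}. d i j * norm (u j))))"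
    by (rule sum_mono) (rule step1)
  also have "\<dots> = (\<Sum>i\<in>I. norm (\<Sum>j\<in>I. T i j (u j)))
      + (\<Sum>i\<in>I. \<Sum>j\<in>I-{i}. c i j * norm (T j j (u j))) + (\<Sum>i\<in>I. \<Sum>j\<in>I-{i}. d i j * norm (u j))"
    by (simp add: sum.distrib)
  also have "(\<Sum>i\<in>I. \<Sum>j\<in>I-{i}. c i j * norm (T j j (u j))) = (\<Sum>j\<in>I. (\<Sum>i\<in>I-{j}. c i j) * norm (T j j (u j)))"
    unfolding swap_lemma[OF fin, of "\<lambda>i j. c i j * norm (T j j (u j))"] by (simp add: sum_distrib_right)
  finally show ?thesis by (simp add: left_diff_distrib sum_subtractf)
qed


lemma core_closed:
  fixes T :: "nat \<Rightarrow> nat \<Rightarrow> 'a::banach \<Rightarrow> 'a"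
  assumes fin: "finite I"
    and Esub: "\<forall>j\<in>I. \<forall>a\<in>E j. \<forall>b\<in>E j. a - b \<in> E j"
    and diff: "\<forall>i\<in>I. \<forall>j\<in>I. \<forall>a\<in>E j. \<forall>b\<in>E j. T i j (a - b) = T i j a - T i j b"
    and clo: "\<forall>j\<in>I. closed {(x, T j j x) | x. x \<in> E j}"
    and bound: "\<forall>i\<in>I. \<forall>j\<in>I. i \<noteq> j \<longrightarrow> (\<forall>x\<in>E j. norm (T i j x) \<le> c i j * norm (T j j x) + d i j * norm x)"
    and dnn: "\<forall>i\<in>I. \<forall>j\<in>I. i \<noteq> j \<longrightarrow> d i j \<ge> 0"
    and csum: "\<forall>j\<in>I. (\<Sum>i\<in>I-{j}. c i j) < 1"
    and xs: "\<forall>m. \<forall>j\<in>I. xs m j \<in> E j"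
    and cx: "\<forall>j\<in>I. (\<lambda>m. xs m j) \<longlonglongrightarrow> x j"
    and cy: "\<forall>i\<in>I. (\<lambda>m. \<Sum>j\<in>I. T i j (xs m j)) \<longlonglongrightarrow> y i"
  shows "(\<forall>j\<in>I. x j \<in> E j) \<and> (\<forall>i\<in>I. (\<Sum>j\<in>I. T i j (x j)) = y i)"
proof -
  define B where "B m i = (\<Sum>j\<in>I. T i j (xs m j))" for m i
  define g where "g m = (\<Sum>i\<in>I. norm (B m i - y i)) + (\<Sum>i\<in>I. \<Sum>j\<in>I-{i}. d i j * norm (xs m j - x j))" for m
  have g0: "g \<longlonglongrightarrow> 0"
  proof -
    have a: "(\<lambda>m. norm (B m i - y i)) \<longlonglongrightarrow> 0" if "i \<in> I" for i
      using cy that unfolding B_def by (intro tendsto_norm_zero LIM_zero) auto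
    have b: "(\<lambda>m. d i j * norm (xs m j - x j)) \<longlonglongrightarrow> 0" if "j \<in> I" for i j
      using cx that by (intro tendsto_mult_right_zero tendsto_norm_zero LIM_zero) auto
    show ?thesis unfolding g_def
      by (intro tendsto_add_zero tendsto_null_sum a b) auto
  qed
  have key: "norm (T j j (xs m j) - T j j (xs l j)) \<le> (g m + g l) / (1 - (\<Sum>i\<in>I-{j}. c i j))"
    if j: "j \<in> I" for j m l
  proof -
    define u where "u j = xs m j - xs l j" for j
    have u: "\<forall>j\<in>I. u j \<in> E j" using Esub xs unfolding u_def by auto
    have est: "(\<Sum>j\<in>I. (1 - (\<Sum>i\<in>I-{j}. c i j)) * norm (T j j (u j)))
     \<le> (\<Sum>i\<in>I. norm (\<Sum>j\<in>I. T i j (u j))) + (\<Sum>i\<in>I. \<Sum>j\<in>I-{i}. d i j * norm (u j))"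
      by (rule core_est[OF fin bound u])
    have "(1 - (\<Sum>i\<in>I-{j}. c i j)) * norm (T j j (u j)) \<le> (\<Sum>j\<in>I. (1 - (\<Sum>i\<in>I-{j}. c i j)) * norm (T j j (u j)))"
      by (rule member_le_sum[OF j _ fin]) (use csum in \<open>auto intro!: mult_nonneg_nonneg\<close>)
    also note est
    also have "(\<Sum>i\<in>I. norm (\<Sum>j\<in>I. T i j (u j))) \<le> (\<Sum>i\<in>I. norm (B m i - y i) + norm (B l i - y i))"
    proof (rule sum_mono)
      fix i assume i: "i \<in> I"
      have "(\<Sum>j\<in>I. T i j (u j)) = (\<Sum>j\<in>I. T i j (xs m j) - T i j (xs l j))"
        using diff xs i unfolding u_def by (intro sum.cong) auto
      also have "\<dots> = (B m i - y i) - (B l i - y i)" unfolding B_def by (simp add: sum_subtractf)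
      finally show "norm (\<Sum>j\<in>I. T i j (u j)) \<le> norm (B m i - y i) + norm (B l i - y i)"
        by (metis norm_triangle_ineq4)
    qed
    also have "(\<Sum>i\<in>I. \<Sum>j\<in>I-{i}. d i j * norm (u j)) \<le>
        (\<Sum>i\<in>I. \<Sum>j\<in>I-{i}. d i j * norm (xs m j - x j) + d i j * norm (xs l j - x j))"
    proof (intro sum_mono)
      fix i j assume i: "i \<in> I" and j: "j \<in> I - {i}"
      have "u j = (xs m j - x j) - (xs l j - x j)" unfolding u_def by simp
      hence "norm (u j) \<le> norm (xs m j - x j) + norm (xs l j - x j)" by (metis norm_triangle_ineq4)
      hence "d i j * norm (u j) \<le> d i j * (norm (xs m j - x j) + norm (xs l j - x j))"
        using dnn i j by (intro mult_left_mono) auto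
      thus "d i j * norm (u j) \<le> d i j * norm (xs m j - x j) + d i j * norm (xs l j - x j)"
        by (simp add: algebra_simps)
    qed
    finally have "(1 - (\<Sum>i\<in>I-{j}. c i j)) * norm (T j j (u j)) \<le> g m + g l"
      unfolding g_def by (simp add: sum.distrib)
    moreover have "T j j (u j) = T j j (xs m j) - T j j (xs l j)"
      using diff xs j unfolding u_def by auto
    moreover have "1 - (\<Sum>i\<in>I-{j}. c i j) > 0" using csum j by auto
    ultimately show ?thesis by (simp add: field_simps)
  qed
  have lim: "x j \<in> E j \<and> (\<lambda>m. T j j (xs m j)) \<longlonglongrightarrow> T j j (x j)" if j: "j \<in> I" for j
  proof -
    define \<gamma> where "\<gamma> = 1 - (\<Sum>i\<in>I-{j}. c i j)"
    have \<gamma>: "\<gamma> > 0" using csum j unfolding \<gamma>_def by auto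
    have "Cauchy (\<lambda>m. T j j (xs m j))"
    proof (rule metric_CauchyI)
      fix e :: real assume e: "e > 0"
      obtain M where M: "\<forall>m\<ge>M. norm (g m - 0) < e * \<gamma> / 2"
        using g0 e \<gamma> unfolding LIMSEQ_iff by (metis half_gt_zero mult_pos_pos)
      show "\<exists>M. \<forall>m\<ge>M. \<forall>n\<ge>M. dist (T j j (xs m j)) (T j j (xs n j)) < e"
      proof (intro exI allI impI)
        fix m n assume "m \<ge> M" "n \<ge> M"
        hence "g m < e * \<gamma> / 2" "g n < e * \<gamma> / 2" using M by auto
        hence "(g m + g n) / \<gamma> < e" using \<gamma> by (simp add: field_simps)
        thus "dist (T j j (xs m j)) (T j j (xs n j)) < e"
          using key[OF j, of m n] unfolding dist_norm \<gamma>_def by linarith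
      qed
    qed
    then obtain z where z: "(\<lambda>m. T j j (xs m j)) \<longlonglongrightarrow> z"
      using Cauchy_convergent_iff convergent_def by blast
    have "(x j, z) \<in> {(x, T j j x) | x. x \<in> E j}"
      using clo j unfolding closed_sequential_limits
      apply (elim ballE allE[of _ "\<lambda>m. (xs m j, T j j (xs m j))"] allE[of _ "(x j, z)"])
      using xs cx z j by (auto intro: tendsto_Pair)
    thus ?thesis using z by auto
  qed
  have conv: "(\<lambda>m. T i j (xs m j)) \<longlonglongrightarrow> T i j (x j)" if i: "i \<in> I" and j: "j \<in> I" for i j
  proof (cases "i = j")
    case True thus ?thesis using lim j by auto
  next
    case False
    have "(\<lambda>m. T i j (xs m j) - T i j (x j)) \<longlonglongrightarrow> 0"
    proof (rule Lim_null_comparison)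
      show "\<forall>\<^sub>F m in sequentially. norm (T i j (xs m j) - T i j (x j)) \<le>
          c i j * norm (T j j (xs m j) - T j j (x j)) + d i j * norm (xs m j - x j)"
      proof (intro always_eventually allI)
        fix m
        have xe: "x j \<in> E j" using lim j by auto
        have "T i j (xs m j) - T i j (x j) = T i j (xs m j - x j)" using diff i j xs xe by auto
        moreover have "T j j (xs m j) - T j j (x j) = T j j (xs m j - x j)" using diff j xs xe by auto
        moreover have "xs m j - x j \<in> E j" using Esub j xs xe by auto
        ultimately show "norm (T i j (xs m j) - T i j (x j)) \<le>
          c i j * norm (T j j (xs m j) - T j j (x j)) + d i j * norm (xs m j - x j)"
          using bound i j False by auto
      qed
      show "(\<lambda>m. c i j * norm (T j j (xs m j) - T j j (x j)) + d i j * norm (xs m j - x j)) \<longlonglongrightarrow> 0"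
        using lim[OF j] cx j
        by (intro tendsto_add_zero tendsto_mult_right_zero tendsto_norm_zero LIM_zero) auto
    qed
    thus ?thesis by (rule LIM_zero_cancel)
  qed
  have "(\<Sum>j\<in>I. T i j (x j)) = y i" if i: "i \<in> I" for i
  proof (rule LIMSEQ_unique)
    show "(\<lambda>m. \<Sum>j\<in>I. T i j (xs m j)) \<longlonglongrightarrow> (\<Sum>j\<in>I. T i j (x j))"
      using conv i by (intro tendsto_sum) auto
    show "(\<lambda>m. \<Sum>j\<in>I. T i j (xs m j)) \<longlonglongrightarrow> y i" using cy i by auto
  qed
  thus ?thesis using lim by auto
qed


theorem lemma5p4:
  fixes J :: "'a::banach \<Rightarrow> 'a"
    and n :: nat
    and S :: "nat \<Rightarrow> 'a set"
    and D :: "nat \<Rightarrow> nat \<Rightarrow> 'a set"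
    and A :: "nat \<Rightarrow> nat \<Rightarrow> 'a \<Rightarrow> 'a"
    and c d :: "nat \<Rightarrow> nat \<Rightarrow> real"
    and \<pi> :: "nat \<Rightarrow> nat"
  assumes J: "complex_structure J"
    and n2: "n \<ge> 2"
    and S_closed: "\<forall>i\<in>{1..n}. csubspace J (S i) \<and> closed (S i)"
    and D_sub: "\<forall>i\<in>{1..n}. \<forall>j\<in>{1..n}. D i j \<subseteq> S j"
    and A_lin: "\<forall>i\<in>{1..n}. \<forall>j\<in>{1..n}. clinear_on J (D i j) (A i j)"
    and A_maps: "\<forall>i\<in>{1..n}. \<forall>j\<in>{1..n}. \<forall>x\<in>D i j. A i j x \<in> S i"
    and A_diag_closed: "\<forall>i\<in>{1..n}. closed_operator (D i i) (A i i)"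
    and D_incl: "\<forall>i\<in>{1..n}. \<forall>j\<in>{1..n}. i \<noteq> j \<longrightarrow> D j j \<subseteq> D i j"
    and cd_nonneg: "\<forall>i\<in>{1..n}. \<forall>j\<in>{1..n}. i \<noteq> j \<longrightarrow> c i j \<ge> 0 \<and> d i j \<ge> 0"
    and rel_bound: "\<forall>i\<in>{1..n}. \<forall>j\<in>{1..n}. i \<noteq> j \<longrightarrow>
        (\<forall>x\<in>D j j. norm (A i j x) \<le> c i j * norm (A j j x) + d i j * norm x)"
    and c_sum: "\<forall>j\<in>{1..n}. (\<Sum>i\<in>{1..n} - {j}. c i j) < 1"
    and perm: "\<pi> permutes {1..n}"
  shows "\<forall>k\<in>{1..n}. block_closed S (inv \<pi>) k (block_dom D (inv \<pi>) k) (block_op A (inv \<pi>) k)"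
proof
  fix k assume k: "k \<in> {1..n}"
  define s where "s = inv \<pi>"
  have sp: "s permutes {1..n}" unfolding s_def using perm by (rule permutes_inv)
  have sin: "s i \<in> {1..n}" if "i \<in> {1..k}" for i
    using permutes_in_image[OF sp] that k by auto
  have sinj: "s i \<noteq> s j" if "i \<noteq> j" for i j
    using permutes_inj[OF sp] that by (meson injD)
  show "block_closed S s k (block_dom D s k) (block_op A s k)"
    unfolding block_closed_def
  proof (intro allI impI)
    fix xs x y assume H: "(\<forall>m. xs m \<in> block_dom D s k) \<and> x \<in> prod_space S s k \<and> y \<in> prod_space S s k
        \<and> (\<lambda>m. prod_norm k (\<lambda>i. xs m i - x i)) \<longlonglongrightarrow> 0
        \<and> (\<lambda>m. prod_norm k (\<lambda>i. block_op A s k (xs m) i - y i)) \<longlonglongrightarrow> 0"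
    let ?I = "{1..k::nat}"
    have comp: "(\<lambda>m. f m i) \<longlonglongrightarrow> l i" if "(\<lambda>m. prod_norm k (\<lambda>i. f m i - l i)) \<longlonglongrightarrow> 0" "i \<in> ?I"
      for f :: "nat \<Rightarrow> nat \<Rightarrow> 'a" and l i
    proof -
      have "(\<lambda>m. f m i - l i) \<longlonglongrightarrow> 0"
      proof (rule Lim_null_comparison[OF always_eventually])
        show "\<forall>m. norm (f m i - l i) \<le> prod_norm k (\<lambda>i. f m i - l i)"
          unfolding prod_norm_def using that(2) by (auto intro: member_le_sum)
      qed (rule that(1))
      thus ?thesis by (rule LIM_zero_cancel)
    qed
    have xsd: "\<forall>m. \<forall>j\<in>?I. xs m j \<in> D (s j) (s j)" using H unfolding block_dom_def by auto
    have core: "(\<forall>j\<in>?I. x j \<in> D (s j) (s j)) \<and> (\<forall>i\<in>?I. (\<Sum>j\<in>?I. A (s i) (s j) (x j)) = y i)"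
    proof (rule core_closed[where E="\<lambda>j. D (s j) (s j)" and c="\<lambda>i j. c (s i) (s j)"
          and d="\<lambda>i j. d (s i) (s j)" and xs=xs])
      show "finite ?I" by simp
      show "\<forall>j\<in>?I. \<forall>a\<in>D (s j) (s j). \<forall>b\<in>D (s j) (s j). a - b \<in> D (s j) (s j)"
      proof (intro ballI)
        fix j a b assume "j \<in> ?I" "a \<in> D (s j) (s j)" "b \<in> D (s j) (s j)"
        thus "a - b \<in> D (s j) (s j)" using A_lin sin[of j]
          unfolding clinear_on_def csubspace_def by (auto intro: subspace_diff)
      qed
      show "\<forall>i\<in>?I. \<forall>j\<in>?I. \<forall>a\<in>D (s j) (s j). \<forall>b\<in>D (s j) (s j).
          A (s i) (s j) (a - b) = A (s i) (s j) a - A (s i) (s j) b"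
      proof (intro ballI)
        fix i j a b assume ij: "i \<in> ?I" "j \<in> ?I" and ab: "a \<in> D (s j) (s j)" "b \<in> D (s j) (s j)"
        have sub: "D (s j) (s j) \<subseteq> D (s i) (s j)"
          using D_incl sin[OF ij(1)] sin[OF ij(2)] by (cases "s i = s j") auto
        have amb: "a - b \<in> D (s j) (s j)" using A_lin sin[OF ij(2)] ab
          unfolding clinear_on_def csubspace_def by (auto intro: subspace_diff)
        have "A (s i) (s j) ((a - b) + b) = A (s i) (s j) (a - b) + A (s i) (s j) b"
          using A_lin sin[OF ij(1)] sin[OF ij(2)] amb ab sub unfolding clinear_on_def by blast
        thus "A (s i) (s j) (a - b) = A (s i) (s j) a - A (s i) (s j) b" by (simp add: algebra_simps)
      qed
      show "\<forall>j\<in>?I. closed {(x, A (s j) (s j) x) |x. x \<in> D (s j) (s j)}"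
        using A_diag_closed sin unfolding closed_operator_def by auto
      show "\<forall>i\<in>?I. \<forall>j\<in>?I. i \<noteq> j \<longrightarrow> (\<forall>x\<in>D (s j) (s j).
          norm (A (s i) (s j) x) \<le> c (s i) (s j) * norm (A (s j) (s j) x) + d (s i) (s j) * norm x)"
        using rel_bound sin sinj by blast
      show "\<forall>i\<in>?I. \<forall>j\<in>?I. i \<noteq> j \<longrightarrow> 0 \<le> d (s i) (s j)"
        using cd_nonneg sin sinj by blast
      show "\<forall>j\<in>?I. (\<Sum>i\<in>?I-{j}. c (s i) (s j)) < 1"
      proof
        fix j assume j: "j \<in> ?I"
        have inj: "inj_on s (?I - {j})" using permutes_inj[OF sp] by (auto intro: inj_on_subset)
        have "(\<Sum>i\<in>?I-{j}. c (s i) (s j)) = (\<Sum>i\<in>s ` (?I-{j}). c i (s j))"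
          using sum.reindex[OF inj, of "\<lambda>i. c i (s j)"] by (simp add: comp_def)
        also have "\<dots> \<le> (\<Sum>i\<in>{1..n}-{s j}. c i (s j))"
        proof (rule sum_mono2)
          show "s ` (?I - {j}) \<subseteq> {1..n} - {s j}" using sin sinj by auto
          show "\<And>b. b \<in> {1..n} - {s j} - s ` (?I - {j}) \<Longrightarrow> 0 \<le> c b (s j)"
            using cd_nonneg sin[OF j] by auto
        qed simp
        also have "\<dots> < 1" using c_sum sin[OF j] by auto
        finally show "(\<Sum>i\<in>?I-{j}. c (s i) (s j)) < 1" .
      qed
      show "\<forall>m. \<forall>j\<in>?I. xs m j \<in> D (s j) (s j)" by (rule xsd)
      show "\<forall>j\<in>?I. (\<lambda>m. xs m j) \<longlonglongrightarrow> x j" using H comp[of "\<lambda>m i. xs m i" x] by blast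
      show "\<forall>i\<in>?I. (\<lambda>m. \<Sum>j\<in>?I. A (s i) (s j) (xs m j)) \<longlonglongrightarrow> y i"
      proof
        fix i assume i: "i \<in> ?I"
        have "(\<lambda>m. block_op A s k (xs m) i) \<longlonglongrightarrow> y i" using H comp[of "\<lambda>m i. block_op A s k (xs m) i" y, OF _ i] by blast
        thus "(\<lambda>m. \<Sum>j\<in>?I. A (s i) (s j) (xs m j)) \<longlonglongrightarrow> y i"
          using i unfolding block_op_def by simp
      qed
    qed
    have "x \<in> block_dom D s k" using core H unfolding block_dom_def prod_space_def by auto
    moreover have "block_op A s k x = y"
    proof
      fix i show "block_op A s k x i = y i"
        using core H unfolding block_op_def prod_space_def by auto
    qed
    ultimately show "x \<in> block_dom D s k \<and> block_op A s k x = y" by simp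
  qed
qed

end
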